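(* Let $(q_k,p_{k1},p_{k2})_{k\ge2}$ be real numbers with $q_k>0$, $p_{k1}\ge0$, $p_{k2}>0$ and $q_k+p_{k1}+p_{k2}=1$ for all $k\ge2$, and let $Y$ be the (1,2) random walk defined in the context. For $1\le m<k<n$, $$Q_k^n(m,n)=\sum_{s=m+1}^k\mathbf e_1A_s\cdots A_{n-1}\left(\frac{1+\sum_{s=m+1}^{n-1}\mathbf e_1A_s\cdots A_{n-1}\mathbf e_2^t}{1+\sum_{s=m+1}^{n-1}\mathbf e_1A_s\cdots A_{n-1}\mathbf e_1^t}\mathbf e_1^t-\mathbf e_2^t\right),$$ $$Q_k^{n+1}(m,n)=\sum_{s=m+1}^k\mathbf e_1A_s\cdots A_{n-1}\left(\mathbf e_2^t-\frac{\sum_{s=m+1}^{n-1}\mathbf e_1A_s\cdots A_{n-1}\mathbf e_2^t}{1+\sum_{s=m+1}^{n-1}\mathbf e_1A_s\cdots A_{n-1}\mathbf e_1^t}\mathbf e_1^t\right),$$ $$Q_k(m,n,+)=\frac{\sum_{s=m+1}^k\mathbf e_1A_s\cdots A_{n-1}\mathbf e_1^t}{1+\sum_{s=m+1}^{n-1}\mathbf e_1A_s\cdots A_{n-1}\mathbf e_1^t}.$$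
   Context: The (1,2) random walk $Y$ is the Markov chain on $\mathbb Z_+=\{0,1,2,\dots\}$ with $P(Y_{k+1}=0\mid Y_k=1)=P(Y_{k+1}=2\mid Y_k=0)=1$ and, for $n\ge2$, $P(Y_{k+1}=n-1\mid Y_k=n)=q_n$, $P(Y_{k+1}=n+1\mid Y_k=n)=p_{n1}$, $P(Y_{k+1}=n+2\mid Y_k=n)=p_{n2}$. For $k\ge2$, $a_k=(p_{k1}+p_{k2})/q_k$, $b_k=p_{k2}/q_k$, $A_k=\begin{pmatrix}a_k&b_k\\1&0\end{pmatrix}$; $\mathbf e_1=(1,0)$, $\mathbf e_2=(0,1)$, $^t$ denotes transpose. For $m\le k\le n+1$ and $j\in\{n,n+1\}$, $Q_k^j(m,n)$ is the probability, for $Y$ started at $Y_0=k$, that $Y$ hits $[n,\infty)$ before hitting $[0,m]$ and first enters $[n,\infty)$ at the site $j$; $Q_k(m,n,+)=Q_k^n(m,n)+Q_k^{n+1}(m,n)$ is the probability, starting from $k$, that $Y$ hits $[n,\infty)$ before $[0,m]$. *)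

theory Defs
  imports "HOL-Analysis.Analysis"
begin

text \<open>One-step transition probabilities of the (1,2) random walk on the nonnegative integers,
  with parameters q k, p1 k (= p_{k1}), p2 k (= p_{k2}) for k >= 2.\<close>
definition trans12 :: "(nat \<Rightarrow> real) \<Rightarrow> (nat \<Rightarrow> real) \<Rightarrow> (nat \<Rightarrow> real) \<Rightarrow> nat \<Rightarrow> nat \<Rightarrow> real" where
  "trans12 q p1 p2 x y =
     (if x = 0 then (if y = 2 then 1 else 0)
      else if x = 1 then (if y = 0 then 1 else 0)
      else if y = x - 1 then q x
      else if y = x + 1 then p1 x
      else if y = x + 2 then p2 x
      else 0)"

fun path_prob :: "(nat \<Rightarrow> real) \<Rightarrow> (nat \<Rightarrow> real) \<Rightarrow> (nat \<Rightarrow> real) \<Rightarrow> nat \<Rightarrow> nat list \<Rightarrow> real" where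
  "path_prob q p1 p2 x [] = 1"
| "path_prob q p1 p2 x (y # ys) = trans12 q p1 p2 x y * path_prob q p1 p2 y ys"

text \<open>Event on a trajectory ys = (Y_0, Y_1, ...): Y hits [n,oo) before [0,m], and the first
  entrance into [n,oo) happens at site j.\<close>
definition exit_at :: "nat \<Rightarrow> nat \<Rightarrow> nat \<Rightarrow> nat list \<Rightarrow> bool" where
  "exit_at m n j ys \<longleftrightarrow>
     (\<exists>i < length ys. ys ! i = j \<and> n \<le> ys ! i \<and> (\<forall>l < i. m < ys ! l \<and> ys ! l < n))"

text \<open>Probability, starting at k, that the event occurs within the first t steps. All trajectories
  of positive probability of length t started at k stay in {0..k+2t}.\<close>
definition Qfin :: "(nat \<Rightarrow> real) \<Rightarrow> (nat \<Rightarrow> real) \<Rightarrow> (nat \<Rightarrow> real) \<Rightarrow> nat \<Rightarrow> nat \<Rightarrow> nat \<Rightarrow> nat \<Rightarrow> nat \<Rightarrow> real" where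
  "Qfin q p1 p2 j m n k t =
     (\<Sum>xs \<in> {xs. length xs = t \<and> set xs \<subseteq> {0..k + 2 * t}}.
        (if exit_at m n j (k # xs) then path_prob q p1 p2 k xs else 0))"

text \<open>Q_k^j(m,n): the probability of the (increasing) union over t of these events.\<close>
definition Qj :: "(nat \<Rightarrow> real) \<Rightarrow> (nat \<Rightarrow> real) \<Rightarrow> (nat \<Rightarrow> real) \<Rightarrow> nat \<Rightarrow> nat \<Rightarrow> nat \<Rightarrow> nat \<Rightarrow> real" where
  "Qj q p1 p2 j m n k = lim (\<lambda>t. Qfin q p1 p2 j m n k t)"

definition Qplus :: "(nat \<Rightarrow> real) \<Rightarrow> (nat \<Rightarrow> real) \<Rightarrow> (nat \<Rightarrow> real) \<Rightarrow> nat \<Rightarrow> nat \<Rightarrow> nat \<Rightarrow> real" where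
  "Qplus q p1 p2 m n k = Qj q p1 p2 n m n k + Qj q p1 p2 (n + 1) m n k"

definition Amat :: "(nat \<Rightarrow> real) \<Rightarrow> (nat \<Rightarrow> real) \<Rightarrow> (nat \<Rightarrow> real) \<Rightarrow> nat \<Rightarrow> real^2^2" where
  "Amat q p1 p2 k =
     (let a = (p1 k + p2 k) / q k; b = p2 k / q k in
      vector [vector [a, b], vector [1, 0]])"

definition Aprod :: "(nat \<Rightarrow> real) \<Rightarrow> (nat \<Rightarrow> real) \<Rightarrow> (nat \<Rightarrow> real) \<Rightarrow> nat \<Rightarrow> nat \<Rightarrow> real^2^2" where
  "Aprod q p1 p2 s n = foldr (\<lambda>i M. Amat q p1 p2 i ** M) [s..<n] (mat 1)"

definition E11 :: "(nat \<Rightarrow> real) \<Rightarrow> (nat \<Rightarrow> real) \<Rightarrow> (nat \<Rightarrow> real) \<Rightarrow> nat \<Rightarrow> nat \<Rightarrow> real" where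
  "E11 q p1 p2 s n = Aprod q p1 p2 s n $ 1 $ 1"

definition E12 :: "(nat \<Rightarrow> real) \<Rightarrow> (nat \<Rightarrow> real) \<Rightarrow> (nat \<Rightarrow> real) \<Rightarrow> nat \<Rightarrow> nat \<Rightarrow> real" where
  "E12 q p1 p2 s n = Aprod q p1 p2 s n $ 1 $ 2"

end

theory Submission imports Defs begin


lemma Aprod_Suc: "s < n \<Longrightarrow> Aprod q p1 p2 s n = Amat q p1 p2 s ** Aprod q p1 p2 (Suc s) n"
  unfolding Aprod_def by (simp add: upt_conv_Cons)

lemma Aprod_n: "Aprod q p1 p2 n n = mat 1"
  unfolding Aprod_def by simp

lemma Aprod_entries:
  assumes "s < n"
  shows "Aprod q p1 p2 s n $ 1 $ i = ((p1 s + p2 s) / q s) * Aprod q p1 p2 (Suc s) n $ 1 $ i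
            + (p2 s / q s) * Aprod q p1 p2 (Suc s) n $ 2 $ i"
    and "Aprod q p1 p2 s n $ 2 $ i = Aprod q p1 p2 (Suc s) n $ 1 $ i"
  using assms by (simp_all add: Aprod_Suc matrix_matrix_mult_def sum_2 Amat_def Let_def)

lemma Aprod_nonneg:
  assumes pos: "\<forall>i\<ge>2. q i > 0 \<and> p1 i \<ge> 0 \<and> p2 i > 0 \<and> q i + p1 i + p2 i = 1"
  shows "s \<ge> 2 \<Longrightarrow> Aprod q p1 p2 s n $ a $ b \<ge> 0"
proof (induction "n - s" arbitrary: s a b)
  case 0
  then have "Aprod q p1 p2 s n = mat 1" unfolding Aprod_def by simp
  then show ?case by (simp add: mat_def)
next
  case (Suc d)
  then have sn: "s < n" by simp
  have ih: "\<And>a b. Aprod q p1 p2 (Suc s) n $ a $ b \<ge> 0" using Suc by simp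
  have "q s > 0" "p1 s \<ge> 0" "p2 s > 0" using pos Suc by auto
  then show ?case
    using ih[of 1 b] ih[of 2 b] exhaust_2[of a] Aprod_entries[OF sn, of q p1 p2 b]
    by (auto intro!: add_nonneg_nonneg mult_nonneg_nonneg)
qed


lemma exit_at_Cons:
  "exit_at m n j (x # zs) \<longleftrightarrow> (x = j \<and> n \<le> x) \<or> (m < x \<and> x < n \<and> exit_at m n j zs)"
proof
  assume "exit_at m n j (x # zs)"
  then obtain i where i: "i < length (x # zs)" "(x#zs) ! i = j" "n \<le> (x#zs) ! i"
    "\<forall>l<i. m < (x#zs) ! l \<and> (x#zs) ! l < n" unfolding exit_at_def by blast
  show "(x = j \<and> n \<le> x) \<or> (m < x \<and> x < n \<and> exit_at m n j zs)"
  proof (cases i)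
    case 0 then show ?thesis using i by simp
  next
    case (Suc i')
    have "m < x \<and> x < n" using i(4) Suc by (metis nth_Cons_0 zero_less_Suc)
    moreover have "exit_at m n j zs" unfolding exit_at_def
      using i Suc by (intro exI[of _ i']) auto
    ultimately show ?thesis by blast
  qed
next
  assume "(x = j \<and> n \<le> x) \<or> (m < x \<and> x < n \<and> exit_at m n j zs)"
  then show "exit_at m n j (x # zs)"
  proof
    assume "x = j \<and> n \<le> x" then show ?thesis unfolding exit_at_def by (intro exI[of _ 0]) auto
  next
    assume h: "m < x \<and> x < n \<and> exit_at m n j zs"
    then obtain i where i: "i < length zs" "zs ! i = j" "n \<le> zs ! i"
      "\<forall>l<i. m < zs ! l \<and> zs ! l < n" unfolding exit_at_def by blast
    have "\<forall>l<Suc i. m < (x # zs) ! l \<and> (x # zs) ! l < n"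
    proof (intro allI impI)
      fix l assume "l < Suc i"
      then show "m < (x # zs) ! l \<and> (x # zs) ! l < n" using i h by (cases l) auto
    qed
    then show ?thesis unfolding exit_at_def using i by (intro exI[of _ "Suc i"]) auto
  qed
qed

lemma exit_at_Nil: "\<not> exit_at m n j []" unfolding exit_at_def by simp

lemma sum_lists_Suc:
  assumes "finite A"
  shows "(\<Sum>xs\<in>{xs. length xs = Suc t \<and> set xs \<subseteq> A}. f xs) =
         (\<Sum>y\<in>A. \<Sum>ys\<in>{ys. length ys = t \<and> set ys \<subseteq> A}. f (y # ys))"
proof -
  have eq: "{xs. length xs = Suc t \<and> set xs \<subseteq> A} =
        (\<lambda>(y,ys). y # ys) ` (A \<times> {ys. length ys = t \<and> set ys \<subseteq> A})"
  proof (rule set_eqI, rule iffI)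
    fix xs assume "xs \<in> {xs. length xs = Suc t \<and> set xs \<subseteq> A}"
    then show "xs \<in> (\<lambda>(y,ys). y # ys) ` (A \<times> {ys. length ys = t \<and> set ys \<subseteq> A})"
      by (cases xs) (auto simp: image_iff)
  qed auto
  have inj: "inj_on (\<lambda>(y,ys). y # ys) (A \<times> {ys. length ys = t \<and> set ys \<subseteq> A})"
    by (auto simp: inj_on_def)
  have fin: "finite {ys. length ys = t \<and> set ys \<subseteq> A}"
    using finite_lists_length_eq[OF assms] by (simp add: conj_commute)
  show ?thesis
    unfolding eq sum.reindex[OF inj] using assms fin
    by (simp add: sum.cartesian_product prod.case_distrib)
qed

lemma trans_le: "trans12 q p1 p2 x y \<noteq> 0 \<Longrightarrow> y \<le> x + 2"
  unfolding trans12_def by (auto split: if_splits)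

lemma sum_trans:
  assumes "x + 2 \<le> B" "2 \<le> x"
  shows "(\<Sum>y\<in>{0..B}. trans12 q p1 p2 x y * f y) = q x * f (x-1) + p1 x * f (x+1) + p2 x * f (x+2)"
proof -
  have "\<And>y. trans12 q p1 p2 x y * f y = (if y = x - 1 then q x * f (x-1) else 0)
     + (if y = x + 1 then p1 x * f (x+1) else 0) + (if y = x + 2 then p2 x * f (x+2) else 0)"
    using assms(2) unfolding trans12_def by auto
  then show ?thesis using assms by (simp add: sum.distrib)
qed

lemma sum_trans_one:
  assumes pos: "\<forall>i\<ge>2. q i > 0 \<and> p1 i \<ge> 0 \<and> p2 i > 0 \<and> q i + p1 i + p2 i = 1"
    and "x + 2 \<le> B"
  shows "(\<Sum>y\<in>{0..B}. trans12 q p1 p2 x y) = 1"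
proof (cases "x \<ge> 2")
  case True
  then show ?thesis using sum_trans[OF assms(2) True, of q p1 p2 "\<lambda>_. 1"] pos by simp
next
  case False
  then have "x = 0 \<or> x = 1" by auto
  then show ?thesis using assms(2) unfolding trans12_def by auto
qed

definition SS where
  "SS q p1 p2 j m n B x t = (\<Sum>xs\<in>{xs. length xs = t \<and> set xs \<subseteq> {0..B}}.
        (if exit_at m n j (x#xs) then path_prob q p1 p2 x xs else 0))"

lemma total_prob:
  assumes pos: "\<forall>i\<ge>2. q i > 0 \<and> p1 i \<ge> 0 \<and> p2 i > 0 \<and> q i + p1 i + p2 i = 1"
  shows "x + 2 * t \<le> B \<Longrightarrow> (\<Sum>xs\<in>{xs. length xs = t \<and> set xs \<subseteq> {0..B}}. path_prob q p1 p2 x xs) = 1"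
proof (induction t arbitrary: x)
  case 0
  have "{xs. length xs = 0 \<and> set xs \<subseteq> {0..B}} = {[]}" by auto
  then show ?case by simp
next
  case (Suc t)
  have "(\<Sum>xs\<in>{xs. length xs = Suc t \<and> set xs \<subseteq> {0..B}}. path_prob q p1 p2 x xs)
     = (\<Sum>y\<in>{0..B}. trans12 q p1 p2 x y * (\<Sum>ys\<in>{ys. length ys = t \<and> set ys \<subseteq> {0..B}}. path_prob q p1 p2 y ys))"
    by (simp add: sum_lists_Suc sum_distrib_left)
  also have "\<dots> = (\<Sum>y\<in>{0..B}. trans12 q p1 p2 x y)"
  proof (rule sum.cong[OF refl])
    fix y assume "y \<in> {0..B}"
    show "trans12 q p1 p2 x y * (\<Sum>ys\<in>{ys. length ys = t \<and> set ys \<subseteq> {0..B}}. path_prob q p1 p2 y ys) = trans12 q p1 p2 x y"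
    proof (cases "trans12 q p1 p2 x y = 0")
      case False
      then have "y \<le> x + 2" by (rule trans_le)
      then show ?thesis using Suc by simp
    qed simp
  qed
  also have "\<dots> = 1" using sum_trans_one[OF pos] Suc by simp
  finally show ?case .
qed

fun gg :: "(nat \<Rightarrow> real) \<Rightarrow> (nat \<Rightarrow> real) \<Rightarrow> (nat \<Rightarrow> real) \<Rightarrow> nat \<Rightarrow> nat \<Rightarrow> nat \<Rightarrow> nat \<Rightarrow> nat \<Rightarrow> real" where
  "gg q p1 p2 j m n 0 x = (if x = j then 1 else 0)"
| "gg q p1 p2 j m n (Suc t) x = (if m < x \<and> x < n then
      q x * gg q p1 p2 j m n t (x-1) + p1 x * gg q p1 p2 j m n t (x+1) + p2 x * gg q p1 p2 j m n t (x+2)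
    else if x = j then 1 else 0)"

lemma SS_gg:
  assumes pos: "\<forall>i\<ge>2. q i > 0 \<and> p1 i \<ge> 0 \<and> p2 i > 0 \<and> q i + p1 i + p2 i = 1"
    and m1: "1 \<le> m" and nj: "n \<le> j"
  shows "x + 2 * t \<le> B \<Longrightarrow> SS q p1 p2 j m n B x t = gg q p1 p2 j m n t x"
proof (induction t arbitrary: x)
  case 0
  have "{xs. length xs = 0 \<and> set xs \<subseteq> {0..B}} = {[]}" by auto
  then show ?case using nj by (simp add: SS_def exit_at_Cons exit_at_Nil)
next
  case (Suc t)
  show ?case
  proof (cases "m < x \<and> x < n")
    case True
    then have x2: "2 \<le> x" using m1 by simp
    have "SS q p1 p2 j m n B x (Suc t) = (\<Sum>y\<in>{0..B}. trans12 q p1 p2 x y * SS q p1 p2 j m n B y t)"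
      unfolding SS_def using True
      by (simp add: sum_lists_Suc sum_distrib_left exit_at_Cons if_distrib[of "\<lambda>z. _ * z"] cong: if_cong)
    also have "\<dots> = (\<Sum>y\<in>{0..B}. trans12 q p1 p2 x y * gg q p1 p2 j m n t y)"
    proof (rule sum.cong[OF refl])
      fix y assume "y \<in> {0..B}"
      show "trans12 q p1 p2 x y * SS q p1 p2 j m n B y t = trans12 q p1 p2 x y * gg q p1 p2 j m n t y"
      proof (cases "trans12 q p1 p2 x y = 0")
        case False
        then have "y \<le> x + 2" by (rule trans_le)
        then show ?thesis using Suc by simp
      qed simp
    qed
    also have "\<dots> = gg q p1 p2 j m n (Suc t) x"
      using sum_trans[of x B q p1 p2 "gg q p1 p2 j m n t"] x2 Suc.prems True by simp
    finally show ?thesis .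
  next
    case False
    show ?thesis
    proof (cases "x = j")
      case True
      then have "SS q p1 p2 j m n B x (Suc t) = (\<Sum>xs\<in>{xs. length xs = Suc t \<and> set xs \<subseteq> {0..B}}. path_prob q p1 p2 x xs)"
        unfolding SS_def using nj by (simp add: exit_at_Cons)
      also have "\<dots> = 1" using total_prob[OF pos] Suc.prems by simp
      finally show ?thesis using True False by auto
    next
      case False2: False
      then show ?thesis using False unfolding SS_def by (auto simp: exit_at_Cons)
    qed
  qed
qed

lemma Qfin_gg:
  assumes pos: "\<forall>i\<ge>2. q i > 0 \<and> p1 i \<ge> 0 \<and> p2 i > 0 \<and> q i + p1 i + p2 i = 1"
    and m1: "1 \<le> m" and nj: "n \<le> j"
  shows "Qfin q p1 p2 j m n k t = gg q p1 p2 j m n t k"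
  using SS_gg[OF assms, of k t "k + 2 * t"] unfolding SS_def Qfin_def by simp


lemma gg_const: "\<not> (m < x \<and> x < n) \<Longrightarrow> gg q p1 p2 j m n t x = (if x = j then 1 else 0)"
  by (cases t) auto

lemma gg_bounds:
  assumes pos: "\<forall>i\<ge>2. q i > 0 \<and> p1 i \<ge> 0 \<and> p2 i > 0 \<and> q i + p1 i + p2 i = 1"
    and m1: "1 \<le> m"
  shows "0 \<le> gg q p1 p2 j m n t x \<and> gg q p1 p2 j m n t x \<le> 1"
proof (induction t arbitrary: x)
  case 0 then show ?case by simp
next
  case (Suc t)
  show ?case
  proof (cases "m < x \<and> x < n")
    case True
    then have "x \<ge> 2" using m1 by simp
    then have c: "q x > 0" "p1 x \<ge> 0" "p2 x > 0" "q x + p1 x + p2 x = 1" using pos by auto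
    let ?a = "gg q p1 p2 j m n t (x-1)" and ?b = "gg q p1 p2 j m n t (x+1)" and ?c = "gg q p1 p2 j m n t (x+2)"
    have "q x * ?a \<le> q x * 1" "p1 x * ?b \<le> p1 x * 1" "p2 x * ?c \<le> p2 x * 1"
      using Suc.IH c by (intro mult_left_mono; simp)+
    moreover have "0 \<le> q x * ?a" "0 \<le> p1 x * ?b" "0 \<le> p2 x * ?c"
      using Suc.IH c by simp_all
    moreover have "gg q p1 p2 j m n (Suc t) x = q x * ?a + p1 x * ?b + p2 x * ?c" using True by simp
    ultimately show ?thesis using c by linarith
  qed (simp add: gg_const del: gg.simps)
qed

lemma gg_mono:
  assumes pos: "\<forall>i\<ge>2. q i > 0 \<and> p1 i \<ge> 0 \<and> p2 i > 0 \<and> q i + p1 i + p2 i = 1"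
    and m1: "1 \<le> m" and nj: "n \<le> j"
  shows "gg q p1 p2 j m n t x \<le> gg q p1 p2 j m n (Suc t) x"
proof (induction t arbitrary: x)
  case 0
  show ?case
  proof (cases "m < x \<and> x < n")
    case True
    then have "x \<ge> 2" using m1 by simp
    then have c: "q x > 0" "p1 x \<ge> 0" "p2 x > 0" using pos by auto
    have "0 \<le> gg q p1 p2 j m n (Suc 0) x" using gg_bounds[OF pos m1] by blast
    then show ?thesis using True nj by simp
  qed (simp add: gg_const del: gg.simps)
next
  case (Suc t)
  show ?case
  proof (cases "m < x \<and> x < n")
    case True
    then have "x \<ge> 2" using m1 by simp
    then have c: "q x > 0" "p1 x \<ge> 0" "p2 x > 0" using pos by auto
    have "q x * gg q p1 p2 j m n t (x-1) \<le> q x * gg q p1 p2 j m n (Suc t) (x-1)"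
         "p1 x * gg q p1 p2 j m n t (x+1) \<le> p1 x * gg q p1 p2 j m n (Suc t) (x+1)"
         "p2 x * gg q p1 p2 j m n t (x+2) \<le> p2 x * gg q p1 p2 j m n (Suc t) (x+2)"
      using Suc.IH c by (intro mult_left_mono; simp)+
    moreover have "gg q p1 p2 j m n (Suc t) x = q x * gg q p1 p2 j m n t (x-1) + p1 x * gg q p1 p2 j m n t (x+1) + p2 x * gg q p1 p2 j m n t (x+2)"
      "gg q p1 p2 j m n (Suc (Suc t)) x = q x * gg q p1 p2 j m n (Suc t) (x-1) + p1 x * gg q p1 p2 j m n (Suc t) (x+1) + p2 x * gg q p1 p2 j m n (Suc t) (x+2)"
      using True by (simp del: gg.simps add: gg.simps(2))+
    ultimately show ?thesis by linarith
  qed (simp add: gg_const del: gg.simps)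
qed

definition LL where "LL q p1 p2 j m n x = lim (\<lambda>t. gg q p1 p2 j m n t x)"

lemma gg_LL:
  assumes pos: "\<forall>i\<ge>2. q i > 0 \<and> p1 i \<ge> 0 \<and> p2 i > 0 \<and> q i + p1 i + p2 i = 1"
    and m1: "1 \<le> m" and nj: "n \<le> j"
  shows "(\<lambda>t. gg q p1 p2 j m n t x) \<longlonglongrightarrow> LL q p1 p2 j m n x"
proof -
  have "incseq (\<lambda>t. gg q p1 p2 j m n t x)"
    using gg_mono[OF assms] by (simp add: incseq_SucI)
  moreover have "\<forall>t. gg q p1 p2 j m n t x \<le> 1" using gg_bounds[OF pos m1] by blast
  ultimately obtain L where "(\<lambda>t. gg q p1 p2 j m n t x) \<longlonglongrightarrow> L"
    by (rule incseq_convergent)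
  then show ?thesis unfolding LL_def by (simp add: limI)
qed

lemma LL_harm:
  assumes pos: "\<forall>i\<ge>2. q i > 0 \<and> p1 i \<ge> 0 \<and> p2 i > 0 \<and> q i + p1 i + p2 i = 1"
    and m1: "1 \<le> m" and nj: "n \<le> j" and x: "m < x" "x < n"
  shows "LL q p1 p2 j m n x = q x * LL q p1 p2 j m n (x-1) + p1 x * LL q p1 p2 j m n (x+1)
            + p2 x * LL q p1 p2 j m n (x+2)"
proof -
  have "(\<lambda>t. gg q p1 p2 j m n (Suc t) x) \<longlonglongrightarrow> LL q p1 p2 j m n x"
    using gg_LL[OF pos m1 nj] by (rule LIMSEQ_Suc)
  moreover have "(\<lambda>t. gg q p1 p2 j m n (Suc t) x) \<longlonglongrightarrow> q x * LL q p1 p2 j m n (x-1) + p1 x * LL q p1 p2 j m n (x+1)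
            + p2 x * LL q p1 p2 j m n (x+2)"
  proof -
    have "(\<lambda>t. gg q p1 p2 j m n (Suc t) x) = (\<lambda>t. q x * gg q p1 p2 j m n t (x-1) + p1 x * gg q p1 p2 j m n t (x+1) + p2 x * gg q p1 p2 j m n t (x+2))"
      using x by (simp del: gg.simps add: gg.simps(2))
    then show ?thesis by (simp only:) (intro tendsto_intros gg_LL[OF pos m1 nj])
  qed
  ultimately show ?thesis by (rule LIMSEQ_unique)
qed

lemma LL_bnd:
  assumes "\<not> (m < x \<and> x < n)"
  shows "LL q p1 p2 j m n x = (if x = j then 1 else 0)"
  unfolding LL_def gg_const[OF assms] by simp

lemma harm_le0:
  fixes D :: "nat \<Rightarrow> real"
  assumes pos: "\<forall>i\<ge>2. q i > 0 \<and> p1 i \<ge> 0 \<and> p2 i > 0 \<and> q i + p1 i + p2 i = 1"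
    and m1: "1 \<le> m"
    and bd: "\<forall>x. \<not> (m < x \<and> x < n) \<longrightarrow> D x = 0"
    and hm: "\<forall>x. m < x \<and> x < n \<longrightarrow> D x = q x * D (x-1) + p1 x * D (x+1) + p2 x * D (x+2)"
  shows "D x0 \<le> 0"
proof (rule ccontr)
  assume "\<not> D x0 \<le> 0"
  then have d0: "D x0 > 0" by simp
  then have x0I: "x0 \<in> {m<..<n}" using bd by force
  define M where "M = Max (D ` {m<..<n})"
  have MD: "D y \<le> M" if "y \<in> {m<..<n}" for y unfolding M_def using that by simp
  have Mpos: "M > 0" using MD[OF x0I] d0 by simp
  have Mle: "D y \<le> M" for y using MD[of y] bd Mpos by (cases "m < y \<and> y < n") auto
  have "M \<in> D ` {m<..<n}" unfolding M_def using x0I by (intro Max_in) auto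
  define X where "X = {y \<in> {m<..<n}. D y = M}"
  have finX: "finite X" "X \<noteq> {}" unfolding X_def using \<open>M \<in> D ` {m<..<n}\<close> by auto
  define x where "x = Max X"
  have xX: "x \<in> X" unfolding x_def using finX by (rule Max_in)
  then have xI: "m < x" "x < n" and Dx: "D x = M" unfolding X_def by auto
  have gt: "y \<le> x" if "y \<in> X" for y unfolding x_def using finX that by simp
  have D2: "D (x+2) < M"
  proof (cases "x + 2 < n")
    case True
    then have "x+2 \<notin> X" using gt[of "x+2"] by auto
    then have "D (x+2) \<noteq> M" using True xI unfolding X_def by auto
    then show ?thesis using Mle[of "x+2"] by simp
  next
    case False
    then show ?thesis using bd Mpos by auto
  qed
  have "x \<ge> 2" using xI m1 by simp
  then have c: "q x > 0" "p1 x \<ge> 0" "p2 x > 0" "q x + p1 x + p2 x = 1" using pos by auto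
  have "q x * D (x-1) \<le> q x * M" "p1 x * D (x+1) \<le> p1 x * M"
    using c Mle by (intro mult_left_mono; simp)+
  moreover have "p2 x * D (x+2) < p2 x * M" using c D2 by simp
  ultimately have "D x < (q x + p1 x + p2 x) * M" using hm xI by (simp add: algebra_simps)
  then show False using Dx c by simp
qed

lemma harm_zero:
  fixes D :: "nat \<Rightarrow> real"
  assumes pos: "\<forall>i\<ge>2. q i > 0 \<and> p1 i \<ge> 0 \<and> p2 i > 0 \<and> q i + p1 i + p2 i = 1"
    and m1: "1 \<le> m"
    and bd: "\<forall>x. \<not> (m < x \<and> x < n) \<longrightarrow> D x = 0"
    and hm: "\<forall>x. m < x \<and> x < n \<longrightarrow> D x = q x * D (x-1) + p1 x * D (x+1) + p2 x * D (x+2)"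
  shows "D x0 = 0"
proof -
  have "D x0 \<le> 0" by (rule harm_le0[OF pos m1 bd hm])
  moreover have "(\<lambda>x. - D x) x0 \<le> 0"
    by (rule harm_le0[OF pos m1]) (use bd hm in \<open>auto simp: algebra_simps\<close>)
  ultimately show ?thesis by simp
qed


definition cc where
  "cc q p1 p2 n v1 v2 s = (if s \<le> n then v1 * E11 q p1 p2 s n + v2 * E12 q p1 p2 s n else v2)"

definition FF where
  "FF q p1 p2 m n v1 v2 x = (\<Sum>s = m+1..x. cc q p1 p2 n v1 v2 s)"

lemma cc_rec:
  assumes "x < n"
  shows "cc q p1 p2 n v1 v2 x = (p1 x + p2 x) / q x * cc q p1 p2 n v1 v2 (x+1)
     + p2 x / q x * cc q p1 p2 n v1 v2 (x+2)"
proof (cases "x + 1 < n")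
  case True
  have e: "Aprod q p1 p2 (Suc x) n $ 2 $ i = Aprod q p1 p2 (Suc (Suc x)) n $ 1 $ i" for i
    using Aprod_entries(2)[OF True] by simp
  show ?thesis using True assms
    unfolding cc_def E11_def E12_def
    using Aprod_entries(1)[OF assms, of q p1 p2 1] Aprod_entries(1)[OF assms, of q p1 p2 2] e[of 1] e[of 2]
    by (simp add: algebra_simps)
next
  case False
  then have xn: "Suc x = n" using assms by simp
  show ?thesis using assms xn
    unfolding cc_def E11_def E12_def
    using Aprod_entries(1)[OF assms, of q p1 p2 1] Aprod_entries(1)[OF assms, of q p1 p2 2]
    by (simp add: Aprod_n mat_def algebra_simps)
qed

lemma FF_Suc: "m \<le> x \<Longrightarrow> FF q p1 p2 m n v1 v2 (Suc x) = FF q p1 p2 m n v1 v2 x + cc q p1 p2 n v1 v2 (Suc x)"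
  unfolding FF_def by simp

lemma FF_m: "FF q p1 p2 m n v1 v2 m = 0"
  unfolding FF_def by simp

lemma FF_harm:
  assumes pos: "\<forall>i\<ge>2. q i > 0 \<and> p1 i \<ge> 0 \<and> p2 i > 0 \<and> q i + p1 i + p2 i = 1"
    and m1: "1 \<le> m" and x: "m < x" "x < n"
  shows "FF q p1 p2 m n v1 v2 x = q x * FF q p1 p2 m n v1 v2 (x-1) + p1 x * FF q p1 p2 m n v1 v2 (x+1)
            + p2 x * FF q p1 p2 m n v1 v2 (x+2)"
proof -
  have "x \<ge> 2" using x m1 by simp
  then have c: "q x > 0" "p1 x \<ge> 0" "p2 x > 0" "q x + p1 x + p2 x = 1" using pos by auto
  define F where "F = FF q p1 p2 m n v1 v2 x"
  define c0 where "c0 = cc q p1 p2 n v1 v2 x"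
  define c1 where "c1 = cc q p1 p2 n v1 v2 (x+1)"
  define c2 where "c2 = cc q p1 p2 n v1 v2 (x+2)"
  have f1: "FF q p1 p2 m n v1 v2 (x+1) = F + c1" unfolding F_def c1_def using FF_Suc[of m x] x by simp
  have f2: "FF q p1 p2 m n v1 v2 (x+2) = F + c1 + c2" unfolding F_def c1_def c2_def
    using FF_Suc[of m x] FF_Suc[of m "Suc x"] x by simp
  have f0: "FF q p1 p2 m n v1 v2 (x-1) = F - c0" unfolding F_def c0_def
    using FF_Suc[of m "x-1"] x by simp
  have r: "c0 = (p1 x + p2 x) / q x * c1 + p2 x / q x * c2" unfolding c0_def c1_def c2_def
    by (rule cc_rec[OF x(2)])
  then have r': "q x * c0 = (p1 x + p2 x) * c1 + p2 x * c2" using c by (simp add: field_simps)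
  have "F = (q x + p1 x + p2 x) * F" using c by simp
  then show ?thesis unfolding F_def[symmetric] f0 f1 f2 using r'
    by (simp add: algebra_simps)
qed

lemma Qj_FF:
  assumes pos: "\<forall>i\<ge>2. q i > 0 \<and> p1 i \<ge> 0 \<and> p2 i > 0 \<and> q i + p1 i + p2 i = 1"
    and m1: "1 \<le> m" and nj: "n \<le> j" and k: "m < k" "k < n"
    and Fn: "FF q p1 p2 m n v1 v2 n = (if n = j then 1 else 0)"
    and Fn1: "FF q p1 p2 m n v1 v2 (n+1) = (if n + 1 = j then 1 else 0)"
  shows "Qj q p1 p2 j m n k = FF q p1 p2 m n v1 v2 k"
proof -
  define H where "H x = (if m < x \<and> x < n then FF q p1 p2 m n v1 v2 x else (if x = j then 1 else 0))" for x
  have HF: "H y = FF q p1 p2 m n v1 v2 y" if "m \<le> y" "y \<le> n + 1" for y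
  proof -
    have "y = m \<or> (m < y \<and> y < n) \<or> y = n \<or> y = n+1" using that by linarith
    then consider "y = m" | "m < y \<and> y < n" | "y = n" | "y = n+1" by blast
    then show ?thesis
    proof cases
      case 1 then show ?thesis unfolding H_def using FF_m k nj by auto
    qed (use Fn Fn1 k in \<open>auto simp: H_def\<close>)
  qed
  define D where "D x = LL q p1 p2 j m n x - H x" for x
  have "D k = 0"
  proof (rule harm_zero[OF pos m1])
    show "\<forall>x. \<not> (m < x \<and> x < n) \<longrightarrow> D x = 0"
      unfolding D_def H_def using LL_bnd by auto
    show "\<forall>x. m < x \<and> x < n \<longrightarrow> D x = q x * D (x-1) + p1 x * D (x+1) + p2 x * D (x+2)"
    proof (intro allI impI)
      fix x assume x: "m < x \<and> x < n"
      have h1: "H (x-1) = FF q p1 p2 m n v1 v2 (x-1)" "H (x+1) = FF q p1 p2 m n v1 v2 (x+1)"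
        "H (x+2) = FF q p1 p2 m n v1 v2 (x+2)" "H x = FF q p1 p2 m n v1 v2 x"
        using x by (intro HF; linarith)+
      have "H x = q x * H (x-1) + p1 x * H (x+1) + p2 x * H (x+2)"
        unfolding h1 using FF_harm[OF pos m1, of x n v1 v2] x by simp
      then show "D x = q x * D (x-1) + p1 x * D (x+1) + p2 x * D (x+2)"
        unfolding D_def using LL_harm[OF pos m1 nj, of x] x by (simp add: algebra_simps)
    qed
  qed
  moreover have "Qj q p1 p2 j m n k = LL q p1 p2 j m n k"
    unfolding Qj_def LL_def using Qfin_gg[OF pos m1 nj] by (metis ext)
  ultimately show ?thesis unfolding D_def H_def using k by simp
qed

lemma FF_n:
  assumes "m < n"
  shows "FF q p1 p2 m n v1 v2 n = v1 * (1 + (\<Sum>s = m+1..n-1. E11 q p1 p2 s n)) + v2 * (\<Sum>s = m+1..n-1. E12 q p1 p2 s n)"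
    and "FF q p1 p2 m n v1 v2 (n+1) = FF q p1 p2 m n v1 v2 n + v2"
proof -
  have "FF q p1 p2 m n v1 v2 n = FF q p1 p2 m n v1 v2 (n-1) + cc q p1 p2 n v1 v2 n"
    using FF_Suc[of m "n-1"] assms by simp
  also have "FF q p1 p2 m n v1 v2 (n-1) = (\<Sum>s = m+1..n-1. v1 * E11 q p1 p2 s n + v2 * E12 q p1 p2 s n)"
    unfolding FF_def cc_def by (rule sum.cong) auto
  also have "cc q p1 p2 n v1 v2 n = v1" unfolding cc_def E11_def E12_def by (simp add: Aprod_n mat_def)
  finally show "FF q p1 p2 m n v1 v2 n = v1 * (1 + (\<Sum>s = m+1..n-1. E11 q p1 p2 s n)) + v2 * (\<Sum>s = m+1..n-1. E12 q p1 p2 s n)"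
    by (simp add: sum.distrib sum_distrib_left algebra_simps)
  show "FF q p1 p2 m n v1 v2 (n+1) = FF q p1 p2 m n v1 v2 n + v2"
    using FF_Suc[of m n] assms unfolding cc_def by simp
qed


theorem lemma1:
  fixes q p1 p2 :: "nat \<Rightarrow> real" and m k n :: nat
  assumes "\<forall>i\<ge>2. q i > 0 \<and> p1 i \<ge> 0 \<and> p2 i > 0 \<and> q i + p1 i + p2 i = 1"
    and "1 \<le> m" and "m < k" and "k < n"
  shows "Qj q p1 p2 n m n k =
           (\<Sum>s = m+1..k. E11 q p1 p2 s n *
              ((1 + (\<Sum>s = m+1..n-1. E12 q p1 p2 s n)) / (1 + (\<Sum>s = m+1..n-1. E11 q p1 p2 s n)))
              - E12 q p1 p2 s n) \<and>
         Qj q p1 p2 (n + 1) m n k =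
           (\<Sum>s = m+1..k. E12 q p1 p2 s n -
              ((\<Sum>s = m+1..n-1. E12 q p1 p2 s n) / (1 + (\<Sum>s = m+1..n-1. E11 q p1 p2 s n)))
              * E11 q p1 p2 s n) \<and>
         Qplus q p1 p2 m n k =
           (\<Sum>s = m+1..k. E11 q p1 p2 s n) / (1 + (\<Sum>s = m+1..n-1. E11 q p1 p2 s n))"
proof -
  note pos = assms(1) and m1 = assms(2) and k = assms(3,4)
  define S11 where "S11 = (\<Sum>s = m+1..n-1. E11 q p1 p2 s n)"
  define S12 where "S12 = (\<Sum>s = m+1..n-1. E12 q p1 p2 s n)"
  have "S11 \<ge> 0" unfolding S11_def E11_def
    by (rule sum_nonneg) (use Aprod_nonneg[OF pos] m1 in auto)
  then have den: "1 + S11 > 0" by simp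
  have mn: "m < n" using k by simp
  define a where "a = (1 + S12) / (1 + S11)"
  define b where "b = S12 / (1 + S11)"
  have Q1: "Qj q p1 p2 n m n k = FF q p1 p2 m n a (-1) k"
  proof (rule Qj_FF[OF pos m1 _ k])
    have "FF q p1 p2 m n a (-1) n = 1"
      unfolding FF_n(1)[OF mn] S11_def[symmetric] S12_def[symmetric] a_def using den by simp
    then show "FF q p1 p2 m n a (-1) n = (if n = n then 1 else 0)"
      "FF q p1 p2 m n a (-1) (n+1) = (if n + 1 = n then 1 else 0)"
      using FF_n(2)[OF mn, of q p1 p2 a "-1"] by simp_all
  qed simp
  have Q2: "Qj q p1 p2 (n+1) m n k = FF q p1 p2 m n (-b) 1 k"
  proof (rule Qj_FF[OF pos m1 _ k])
    have "FF q p1 p2 m n (-b) 1 n = 0"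
      unfolding FF_n(1)[OF mn] S11_def[symmetric] S12_def[symmetric] b_def using den by simp
    then show "FF q p1 p2 m n (-b) 1 n = (if n = n + 1 then 1 else 0)"
      "FF q p1 p2 m n (-b) 1 (n+1) = (if n + 1 = n + 1 then 1 else 0)"
      using FF_n(2)[OF mn, of q p1 p2 "-b" 1] by simp_all
  qed simp
  have F1: "FF q p1 p2 m n a (-1) k = (\<Sum>s = m+1..k. E11 q p1 p2 s n * a - E12 q p1 p2 s n)"
    unfolding FF_def cc_def by (rule sum.cong) (use k in auto)
  have F2: "FF q p1 p2 m n (-b) 1 k = (\<Sum>s = m+1..k. E12 q p1 p2 s n - b * E11 q p1 p2 s n)"
    unfolding FF_def cc_def by (rule sum.cong) (use k in auto)
  have "Qplus q p1 p2 m n k = (\<Sum>s = m+1..k. E11 q p1 p2 s n * (a - b))"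
    unfolding Qplus_def Q1 Q2 F1 F2 sum.distrib[symmetric] by (rule sum.cong) (auto simp: algebra_simps)
  also have "a - b = 1 / (1 + S11)" unfolding a_def b_def using den by (simp add: field_simps)
  finally have "Qplus q p1 p2 m n k = (\<Sum>s = m+1..k. E11 q p1 p2 s n) / (1 + S11)"
    by (simp add: sum_divide_distrib)
  then show ?thesis using Q1 Q2 F1 F2 unfolding S11_def S12_def a_def b_def by simp
qed

end
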